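(* Let $R$ be a commutative ring and let $(A,d)$ be a differential graded $R$-algebra. (1) If the graded algebra $\ker(d)$ is graded-Noetherian, then $(A,d)$ is dg-Noetherian. (2) If $\ker(d)$ is graded-Artinian, then $(A,d)$ is dg-Artinian.
   Context: A differential graded (dg) $R$-algebra $(A,d)$ is a $\mathbb{Z}$-graded $R$-algebra $A$ with an $R$-linear endomorphism $d$, homogeneous of degree $1$, with $d^2=0$ and $d(ab)=d(a)b+(-1)^{|a|}a\,d(b)$ for homogeneous $a,b$. Then $\ker(d)$ (the cycles) is a graded subalgebra of $A$. A graded algebra is graded-Noetherian (resp. graded-Artinian) if it satisfies the ascending (resp. descending) chain condition on graded ideals. A dg-ideal of $(A,d)$ is a graded ideal $I$ with $d(I)\subseteq I$; $(A,d)$ is dg-Noetherian (resp. dg-Artinian) if it satisfies the ascending (resp. descending) chain condition on dg-ideals (i.e. on dg-submodules of $A$ viewed as a dg-module over itself). *)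

theory Defs
  imports Main
begin

text \<open>A (Z-)graded R-algebra is modelled as a unital ring type 'a together with
  a scalar action smul of a commutative ring 'r and a family of homogeneous
  components G :: int \<Rightarrow> 'a set giving a direct-sum decomposition of UNIV.\<close>

definition homogeneous_decomp :: "(int \<Rightarrow> 'a::ring_1 set) \<Rightarrow> 'a set \<Rightarrow> 'a \<Rightarrow> bool" where
  "homogeneous_decomp G S x \<longleftrightarrow>
     (\<exists>c :: int \<Rightarrow> 'a. finite {n. c n \<noteq> 0} \<and> (\<forall>n. c n \<in> S \<inter> G n) \<and>
        x = (\<Sum>n\<in>{n. c n \<noteq> 0}. c n))"

definition graded_R_algebra ::
  "('r::comm_ring_1 \<Rightarrow> 'a::ring_1 \<Rightarrow> 'a) \<Rightarrow> (int \<Rightarrow> 'a set) \<Rightarrow> bool" where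
  "graded_R_algebra smul G \<longleftrightarrow>
     \<comment> \<open>R-algebra structure\<close>
     (\<forall>r s x. smul (r + s) x = smul r x + smul s x) \<and>
     (\<forall>r x y. smul r (x + y) = smul r x + smul r y) \<and>
     (\<forall>r s x. smul (r * s) x = smul r (smul s x)) \<and>
     (\<forall>x. smul 1 x = x) \<and>
     (\<forall>r x y. smul r (x * y) = smul r x * y) \<and>
     (\<forall>r x y. smul r (x * y) = x * smul r y) \<and>
     \<comment> \<open>grading\<close>
     (\<forall>n. 0 \<in> G n \<and> (\<forall>x\<in>G n. \<forall>y\<in>G n. x + y \<in> G n \<and> - x \<in> G n)
          \<and> (\<forall>r. \<forall>x\<in>G n. smul r x \<in> G n)) \<and>
     1 \<in> G 0 \<and>
     (\<forall>m n. \<forall>x\<in>G m. \<forall>y\<in>G n. x * y \<in> G (m + n)) \<and>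
     (\<forall>x. \<exists>!c :: int \<Rightarrow> 'a. finite {n. c n \<noteq> 0} \<and> (\<forall>n. c n \<in> G n) \<and>
        x = (\<Sum>n\<in>{n. c n \<noteq> 0}. c n))"

definition homogeneous :: "(int \<Rightarrow> 'a set) \<Rightarrow> 'a \<Rightarrow> bool" where
  "homogeneous G x \<longleftrightarrow> (\<exists>n. x \<in> G n)"

definition dg_R_algebra ::
  "('r::comm_ring_1 \<Rightarrow> 'a::ring_1 \<Rightarrow> 'a) \<Rightarrow> (int \<Rightarrow> 'a set) \<Rightarrow> ('a \<Rightarrow> 'a) \<Rightarrow> bool" where
  "dg_R_algebra smul G d \<longleftrightarrow>
     graded_R_algebra smul G \<and>
     (\<forall>x y. d (x + y) = d x + d y) \<and>
     (\<forall>r x. d (smul r x) = smul r (d x)) \<and>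
     (\<forall>n. \<forall>x\<in>G n. d x \<in> G (n + 1)) \<and>
     (\<forall>x. d (d x) = 0) \<and>
     (\<forall>m. \<forall>a\<in>G m. \<forall>b. homogeneous G b \<longrightarrow>
        d (a * b) = d a * b + (if even m then a * d b else - (a * d b)))"

text \<open>Graded (left) ideal of the graded subalgebra with carrier S and grading
  \<open>\<lambda>n. S \<inter> G n\<close>.\<close>

definition graded_ideal_in :: "'a::ring_1 set \<Rightarrow> (int \<Rightarrow> 'a set) \<Rightarrow> 'a set \<Rightarrow> bool" where
  "graded_ideal_in S G I \<longleftrightarrow>
     I \<subseteq> S \<and> 0 \<in> I \<and>
     (\<forall>x\<in>I. \<forall>y\<in>I. x - y \<in> I) \<and>
     (\<forall>s\<in>S. \<forall>x\<in>I. s * x \<in> I) \<and>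
     (\<forall>x\<in>I. homogeneous_decomp G I x)"

definition cycles :: "('a \<Rightarrow> 'a::ring_1) \<Rightarrow> 'a set" where
  "cycles d = {x. d x = 0}"

definition graded_noetherian :: "'a::ring_1 set \<Rightarrow> (int \<Rightarrow> 'a set) \<Rightarrow> bool" where
  "graded_noetherian S G \<longleftrightarrow>
     (\<forall>I :: nat \<Rightarrow> 'a set. (\<forall>n. graded_ideal_in S G (I n)) \<and> (\<forall>n. I n \<subseteq> I (Suc n))
        \<longrightarrow> (\<exists>N. \<forall>n\<ge>N. I n = I N))"

definition graded_artinian :: "'a::ring_1 set \<Rightarrow> (int \<Rightarrow> 'a set) \<Rightarrow> bool" where
  "graded_artinian S G \<longleftrightarrow>
     (\<forall>I :: nat \<Rightarrow> 'a set. (\<forall>n. graded_ideal_in S G (I n)) \<and> (\<forall>n. I (Suc n) \<subseteq> I n)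
        \<longrightarrow> (\<exists>N. \<forall>n\<ge>N. I n = I N))"

definition dg_ideal :: "(int \<Rightarrow> 'a::ring_1 set) \<Rightarrow> ('a \<Rightarrow> 'a) \<Rightarrow> 'a set \<Rightarrow> bool" where
  "dg_ideal G d I \<longleftrightarrow> graded_ideal_in UNIV G I \<and> d ` I \<subseteq> I"

definition dg_noetherian :: "(int \<Rightarrow> 'a::ring_1 set) \<Rightarrow> ('a \<Rightarrow> 'a) \<Rightarrow> bool" where
  "dg_noetherian G d \<longleftrightarrow>
     (\<forall>I :: nat \<Rightarrow> 'a set. (\<forall>n. dg_ideal G d (I n)) \<and> (\<forall>n. I n \<subseteq> I (Suc n))
        \<longrightarrow> (\<exists>N. \<forall>n\<ge>N. I n = I N))"

definition dg_artinian :: "(int \<Rightarrow> 'a::ring_1 set) \<Rightarrow> ('a \<Rightarrow> 'a) \<Rightarrow> bool" where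
  "dg_artinian G d \<longleftrightarrow>
     (\<forall>I :: nat \<Rightarrow> 'a set. (\<forall>n. dg_ideal G d (I n)) \<and> (\<forall>n. I (Suc n) \<subseteq> I n)
        \<longrightarrow> (\<exists>N. \<forall>n\<ge>N. I n = I N))"

end

theory Submission
  imports Defs
begin

lemma dg_add:
  fixes smul :: "'r::comm_ring_1 \<Rightarrow> 'a::ring_1 \<Rightarrow> 'a"
  assumes "dg_R_algebra smul G d"
  shows "\<And>x y. d (x + y) = d x + d y" "d 0 = 0" "\<And>x. d (- x) = - d x" "\<And>x y. d (x - y) = d x - d y"
proof -
  have a: "\<And>x y. d (x + y) = d x + d y" using assms unfolding dg_R_algebra_def by blast
  show "\<And>x y. d (x + y) = d x + d y" by (rule a)
  have "d 0 = d 0 + d 0" using a[of 0 0] by simp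
  then show z: "d 0 = 0" by simp
  have "\<And>x. d (- x) + d x = 0" using a z by (metis add.left_inverse)
  then show n: "\<And>x. d (- x) = - d x" by (simp add: eq_neg_iff_add_eq_0)
  show "\<And>x y. d (x - y) = d x - d y" using a n by (metis diff_conv_add_uminus)
qed

lemma dg_sum:
  fixes smul :: "'r::comm_ring_1 \<Rightarrow> 'a::ring_1 \<Rightarrow> 'a"
  assumes "dg_R_algebra smul G d"
  shows "d (sum f S) = (\<Sum>i\<in>S. d (f i))"
proof (cases "finite S")
  case True
  then show ?thesis by (induction S rule: finite_induct) (auto simp: dg_add[OF assms])
next
  case False
  then show ?thesis by (simp add: dg_add[OF assms])
qed

lemma sum_closed_set:
  assumes "0 \<in> I" "\<And>x y. x \<in> I \<Longrightarrow> y \<in> I \<Longrightarrow> x + y \<in> I" "\<And>i. i \<in> S \<Longrightarrow> f i \<in> I"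
  shows "sum f S \<in> I"
proof (cases "finite S")
  case True
  then show ?thesis using assms(3) by (induction S rule: finite_induct) (auto intro: assms(1,2))
next
  case False
  then show ?thesis using assms(1) by simp
qed

lemma supp_sum:
  fixes c :: "int \<Rightarrow> 'a::ring_1"
  assumes "finite T" "{n. c n \<noteq> 0} \<subseteq> T"
  shows "(\<Sum>n\<in>{n. c n \<noteq> 0}. c n) = (\<Sum>n\<in>T. c n)"
  using assms by (intro sum.mono_neutral_left) auto

lemma dg_decomp:
  fixes smul :: "'r::comm_ring_1 \<Rightarrow> 'a::ring_1 \<Rightarrow> 'a"
  assumes "dg_R_algebra smul G d"
  shows "\<exists>c. finite {n. c n \<noteq> 0} \<and> (\<forall>n. c n \<in> G n) \<and> x = (\<Sum>n\<in>{n. c n \<noteq> 0}. c n)"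
proof -
  have "\<exists>!c :: int \<Rightarrow> 'a. finite {n. c n \<noteq> 0} \<and> (\<forall>n. c n \<in> G n) \<and>
        x = (\<Sum>n\<in>{n. c n \<noteq> 0}. c n)"
    using assms(1) unfolding dg_R_algebra_def graded_R_algebra_def by (elim conjE) (rule spec)
  then show ?thesis by (rule ex1_implies_ex)
qed

lemma dg_uniq:
  fixes smul :: "'r::comm_ring_1 \<Rightarrow> 'a::ring_1 \<Rightarrow> 'a"
  assumes "dg_R_algebra smul G d"
    and "finite {n. c n \<noteq> 0}" "\<forall>n. c n \<in> G n" "x = (\<Sum>n\<in>{n. c n \<noteq> 0}. c n)"
    and "finite {n. e n \<noteq> 0}" "\<forall>n. e n \<in> G n" "x = (\<Sum>n\<in>{n. e n \<noteq> 0}. e n)"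
  shows "c = e"
proof -
  have "\<exists>!c :: int \<Rightarrow> 'a. finite {n. c n \<noteq> 0} \<and> (\<forall>n. c n \<in> G n) \<and>
        x = (\<Sum>n\<in>{n. c n \<noteq> 0}. c n)"
    using assms(1) unfolding dg_R_algebra_def graded_R_algebra_def by (elim conjE) (rule spec)
  then show ?thesis using assms(2-7) by blast
qed

lemma dg_shift:
  fixes smul :: "'r::comm_ring_1 \<Rightarrow> 'a::ring_1 \<Rightarrow> 'a"
  assumes "dg_R_algebra smul G d"
    and "finite {n. c n \<noteq> 0}" "\<forall>n. c n \<in> G n" "x = (\<Sum>n\<in>{n. c n \<noteq> 0}. c n)"
  shows "finite {n. d (c (n - 1)) \<noteq> 0} \<and> (\<forall>n. d (c (n - 1)) \<in> G n) \<and>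
         d x = (\<Sum>n\<in>{n. d (c (n - 1)) \<noteq> 0}. d (c (n - 1)))"
proof -
  let ?T = "(\<lambda>n. n + 1) ` {n. c n \<noteq> 0}"
  have sub: "{n. d (c (n - 1)) \<noteq> 0} \<subseteq> ?T"
  proof
    fix n assume "n \<in> {n. d (c (n - 1)) \<noteq> 0}"
    then have "c (n - 1) \<noteq> 0" using dg_add(2)[OF assms(1)] by auto
    then show "n \<in> ?T" by (intro image_eqI[of _ _ "n - 1"]) auto
  qed
  have fin: "finite ?T" using assms(2) by simp
  have G: "\<forall>n. d (c (n - 1)) \<in> G n"
  proof
    fix n
    have "\<forall>n. \<forall>x\<in>G n. d x \<in> G (n + 1)" using assms(1) unfolding dg_R_algebra_def by blast
    then have "d (c (n - 1)) \<in> G (n - 1 + 1)" using assms(3) by blast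
    then show "d (c (n - 1)) \<in> G n" by simp
  qed
  have "(\<Sum>n\<in>{n. d (c (n - 1)) \<noteq> 0}. d (c (n - 1))) = (\<Sum>n\<in>?T. d (c (n - 1)))"
    using supp_sum[OF fin sub] .
  also have "\<dots> = (\<Sum>n\<in>{n. c n \<noteq> 0}. d (c n))"
    by (subst sum.reindex) (auto simp: inj_on_def)
  also have "\<dots> = d x" using assms(4) by (simp add: dg_sum[OF assms(1)])
  finally show ?thesis using G sub fin finite_subset by metis
qed

lemma dg_cyc_comp:
  fixes smul :: "'r::comm_ring_1 \<Rightarrow> 'a::ring_1 \<Rightarrow> 'a"
  assumes "dg_R_algebra smul G d" "d x = 0"
    and "finite {n. c n \<noteq> 0}" "\<forall>n. c n \<in> G n" "x = (\<Sum>n\<in>{n. c n \<noteq> 0}. c n)"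
  shows "d (c n) = 0"
proof -
  have s: "finite {n. d (c (n - 1)) \<noteq> 0} \<and> (\<forall>n. d (c (n - 1)) \<in> G n) \<and>
         0 = (\<Sum>n\<in>{n. d (c (n - 1)) \<noteq> 0}. d (c (n - 1)))"
    using dg_shift[OF assms(1,3,4,5)] assms(2) by simp
  have G0: "\<forall>n. (0::'a) \<in> G n" using assms(1) unfolding dg_R_algebra_def graded_R_algebra_def by blast
  have "(\<lambda>n. d (c (n - 1))) = (\<lambda>n. 0)"
    by (rule dg_uniq[OF assms(1), of _ 0]) (use s G0 in auto)
  then have "d (c (n + 1 - 1)) = 0" by metis
  then show ?thesis by simp
qed

lemma dg_leib:
  fixes smul :: "'r::comm_ring_1 \<Rightarrow> 'a::ring_1 \<Rightarrow> 'a"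
  assumes "dg_R_algebra smul G d" "a \<in> G m" "b \<in> G n"
  shows "d (a * b) = d a * b + (if even m then a * d b else - (a * d b))"
  using assms unfolding dg_R_algebra_def homogeneous_def by blast

lemma ZI_ideal:
  fixes smul :: "'r::comm_ring_1 \<Rightarrow> 'a::ring_1 \<Rightarrow> 'a"
  assumes A: "dg_R_algebra smul G d" and I: "dg_ideal G d I"
  shows "graded_ideal_in (cycles d) G (I \<inter> cycles d)"
proof -
  have gi: "graded_ideal_in UNIV G I" using I unfolding dg_ideal_def by blast
  have mult: "s * x \<in> I \<inter> cycles d" if s: "s \<in> cycles d" and x: "x \<in> I \<inter> cycles d" for s x
  proof -
    have sxI: "s * x \<in> I" using gi x unfolding graded_ideal_in_def by blast
    obtain c where c: "finite {n. c n \<noteq> 0}" "\<forall>n. c n \<in> G n" "s = (\<Sum>n\<in>{n. c n \<noteq> 0}. c n)"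
      using dg_decomp[OF A] by blast
    obtain e where e: "finite {n. e n \<noteq> 0}" "\<forall>n. e n \<in> G n" "x = (\<Sum>n\<in>{n. e n \<noteq> 0}. e n)"
      using dg_decomp[OF A] by blast
    have dc: "d (c m) = 0" for m using dg_cyc_comp[OF A _ c] s unfolding cycles_def by blast
    have de: "d (e m) = 0" for m using dg_cyc_comp[OF A _ e] x unfolding cycles_def by blast
    have "d (s * x) = d (\<Sum>m\<in>{n. c n \<noteq> 0}. \<Sum>n\<in>{n. e n \<noteq> 0}. c m * e n)"
      using c(3) e(3) by (simp add: sum_product)
    also have "\<dots> = (\<Sum>m\<in>{n. c n \<noteq> 0}. \<Sum>n\<in>{n. e n \<noteq> 0}. d (c m * e n))"
      by (simp add: dg_sum[OF A])
    also have "\<dots> = 0"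
    proof -
      have "d (c m * e n) = 0" for m n
        using dg_leib[OF A c(2)[rule_format] e(2)[rule_format], of m n] dc[of m] de[of n] by simp
      then show ?thesis by simp
    qed
    finally have "s * x \<in> cycles d" unfolding cycles_def by simp
    with sxI show ?thesis by blast
  qed
  have grad: "homogeneous_decomp G (I \<inter> cycles d) x" if x: "x \<in> I \<inter> cycles d" for x
  proof -
    have "homogeneous_decomp G I x" using gi x unfolding graded_ideal_in_def by blast
    then obtain c where c: "finite {n. c n \<noteq> 0}" "\<forall>n. c n \<in> I \<inter> G n" "x = (\<Sum>n\<in>{n. c n \<noteq> 0}. c n)"
      unfolding homogeneous_decomp_def by blast
    have "d (c m) = 0" for m using dg_cyc_comp[OF A _ c(1) _ c(3)] c(2) x unfolding cycles_def by blast
    then show ?thesis unfolding homogeneous_decomp_def cycles_def using c by (intro exI[of _ c]) auto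
  qed
  show ?thesis unfolding graded_ideal_in_def
  proof (intro conjI ballI)
    show "I \<inter> cycles d \<subseteq> cycles d" by blast
    show "0 \<in> I \<inter> cycles d" using gi dg_add(2)[OF A] unfolding graded_ideal_in_def cycles_def by blast
  next
    fix x y assume "x \<in> I \<inter> cycles d" "y \<in> I \<inter> cycles d"
    then show "x - y \<in> I \<inter> cycles d"
      using gi dg_add(4)[OF A] unfolding graded_ideal_in_def cycles_def by auto
  qed (use mult grad in auto)
qed

lemma DI_ideal:
  fixes smul :: "'r::comm_ring_1 \<Rightarrow> 'a::ring_1 \<Rightarrow> 'a"
  assumes A: "dg_R_algebra smul G d" and I: "dg_ideal G d I"
  shows "graded_ideal_in (cycles d) G (d ` I)"
proof -
  have gi: "graded_ideal_in UNIV G I" using I unfolding dg_ideal_def by blast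
  have I0: "0 \<in> I" and Isub: "\<And>x y. x \<in> I \<Longrightarrow> y \<in> I \<Longrightarrow> x - y \<in> I"
    and Imul: "\<And>s x. x \<in> I \<Longrightarrow> s * x \<in> I"
    using gi unfolding graded_ideal_in_def by auto
  have Iadd: "x + y \<in> I" if "x \<in> I" "y \<in> I" for x y
    using Isub[OF that(1) Isub[OF I0 that(2)]] by simp
  have Ineg: "- x \<in> I" if "x \<in> I" for x using Isub[OF I0 that] by simp
  have ddz: "d (d x) = 0" for x using A unfolding dg_R_algebra_def by blast
  have mult: "s * z \<in> d ` I" if s: "s \<in> cycles d" and z: "z \<in> d ` I" for s z
  proof -
    obtain x where x: "x \<in> I" "z = d x" using z by blast
    have "homogeneous_decomp G I x" using gi x unfolding graded_ideal_in_def by blast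
    then obtain e where e: "finite {n. e n \<noteq> 0}" "\<forall>n. e n \<in> I \<inter> G n" "x = (\<Sum>n\<in>{n. e n \<noteq> 0}. e n)"
      unfolding homogeneous_decomp_def by blast
    obtain c where c: "finite {n. c n \<noteq> 0}" "\<forall>n. c n \<in> G n" "s = (\<Sum>n\<in>{n. c n \<noteq> 0}. c n)"
      using dg_decomp[OF A] by blast
    have dc: "d (c m) = 0" for m using dg_cyc_comp[OF A _ c] s unfolding cycles_def by blast
    define f where "f m n = (if even m then c m * e n else - (c m * e n))" for m n
    have fI: "f m n \<in> I" for m n unfolding f_def using e(2) Imul Ineg by auto
    have trm: "c m * d (e n) = d (f m n)" for m n
    proof -
      have "e n \<in> G n" using e(2) by blast
      then have "d (c m * e n) = (if even m then c m * d (e n) else - (c m * d (e n)))"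
        using dg_leib[OF A c(2)[rule_format] \<open>e n \<in> G n\<close>] dc by simp
      then show ?thesis by (cases "even m") (simp_all add: f_def dg_add(3)[OF A])
    qed
    have "s * z = (\<Sum>m\<in>{n. c n \<noteq> 0}. \<Sum>n\<in>{n. e n \<noteq> 0}. c m * d (e n))"
      using c(3) e(3) x(2) by (simp add: sum_product dg_sum[OF A])
    also have "\<dots> = d (\<Sum>m\<in>{n. c n \<noteq> 0}. \<Sum>n\<in>{n. e n \<noteq> 0}. f m n)"
      by (simp add: trm dg_sum[OF A])
    finally have "s * z = d (\<Sum>m\<in>{n. c n \<noteq> 0}. \<Sum>n\<in>{n. e n \<noteq> 0}. f m n)" .
    moreover have "(\<Sum>m\<in>{n. c n \<noteq> 0}. \<Sum>n\<in>{n. e n \<noteq> 0}. f m n) \<in> I"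
    proof (rule sum_closed_set[OF I0])
      show "\<And>x y. x \<in> I \<Longrightarrow> y \<in> I \<Longrightarrow> x + y \<in> I" by (rule Iadd)
      fix m show "(\<Sum>n\<in>{n. e n \<noteq> 0}. f m n) \<in> I"
        by (rule sum_closed_set[OF I0]) (auto intro: Iadd fI)
    qed
    ultimately show ?thesis by blast
  qed
  have grad: "homogeneous_decomp G (d ` I) z" if z: "z \<in> d ` I" for z
  proof -
    obtain x where x: "x \<in> I" "z = d x" using z by blast
    have "homogeneous_decomp G I x" using gi x unfolding graded_ideal_in_def by blast
    then obtain e where e: "finite {n. e n \<noteq> 0}" "\<forall>n. e n \<in> I \<inter> G n" "x = (\<Sum>n\<in>{n. e n \<noteq> 0}. e n)"
      unfolding homogeneous_decomp_def by blast
    have sh: "finite {n. d (e (n - 1)) \<noteq> 0} \<and> (\<forall>n. d (e (n - 1)) \<in> G n) \<and>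
         d x = (\<Sum>n\<in>{n. d (e (n - 1)) \<noteq> 0}. d (e (n - 1)))"
      using dg_shift[OF A e(1) _ e(3)] e(2) by blast
    show ?thesis unfolding homogeneous_decomp_def
      by (rule exI[of _ "\<lambda>n. d (e (n - 1))"]) (use sh e(2) x in auto)
  qed
  show ?thesis unfolding graded_ideal_in_def
  proof (intro conjI ballI)
    show "d ` I \<subseteq> cycles d" unfolding cycles_def using ddz by blast
    show "0 \<in> d ` I" using I0 dg_add(2)[OF A] by force
  next
    fix x y assume "x \<in> d ` I" "y \<in> d ` I"
    then obtain x' y' where "x' \<in> I" "y' \<in> I" "x = d x'" "y = d y'" by blast
    then show "x - y \<in> d ` I" using Isub[of x' y'] dg_add(4)[OF A, of x' y'] by (metis imageI)
  qed (use mult grad in auto)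
qed

lemma eq_lemma:
  fixes smul :: "'r::comm_ring_1 \<Rightarrow> 'a::ring_1 \<Rightarrow> 'a"
  assumes A: "dg_R_algebra smul G d" and I: "dg_ideal G d I" and J: "dg_ideal G d J"
    and sub: "I \<subseteq> J" and z: "J \<inter> cycles d \<subseteq> I \<inter> cycles d" and dd: "d ` J \<subseteq> d ` I"
  shows "I = J"
proof
  have Isub: "\<And>x y. x \<in> I \<Longrightarrow> y \<in> I \<Longrightarrow> x - y \<in> I" and I0: "0 \<in> I"
    using I unfolding dg_ideal_def graded_ideal_in_def by auto
  have Jsub: "\<And>x y. x \<in> J \<Longrightarrow> y \<in> J \<Longrightarrow> x - y \<in> J"
    using J unfolding dg_ideal_def graded_ideal_in_def by auto
  show "J \<subseteq> I"
  proof
    fix x assume x: "x \<in> J"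
    then have "d x \<in> d ` I" using dd by blast
    then obtain y where y: "y \<in> I" "d x = d y" by blast
    have "x - y \<in> J" using Jsub x y(1) sub by blast
    moreover have "d (x - y) = 0" using y dg_add(4)[OF A, of x y] by simp
    ultimately have "x - y \<in> I" using z unfolding cycles_def by blast
    then have "(x - y) - (0 - y) \<in> I" using Isub[OF _ Isub[OF I0 y(1)]] by blast
    then show "x \<in> I" by simp
  qed
qed (rule sub)

lemma noeth_part:
  fixes smul :: "'r::comm_ring_1 \<Rightarrow> 'a::ring_1 \<Rightarrow> 'a" and I :: "nat \<Rightarrow> 'a set"
  assumes A: "dg_R_algebra smul G d"
    and h: "\<forall>n. dg_ideal G d (I n)"
    and mono: "\<And>m n. m \<le> n \<Longrightarrow> I m \<subseteq> I n"
    and N1: "\<forall>n\<ge>N1. I n \<inter> cycles d = I N1 \<inter> cycles d"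
    and N2: "\<forall>n\<ge>N2. d ` I n = d ` I N2"
  shows "\<exists>N. \<forall>n\<ge>N. I n = I N"
proof (intro exI allI impI)
  fix n assume n: "max N1 N2 \<le> n"
  have l1: "N1 \<le> n" "N1 \<le> max N1 N2" "N2 \<le> n" "N2 \<le> max N1 N2" using n by auto
  have z: "I n \<inter> cycles d = I (max N1 N2) \<inter> cycles d"
    using N1[rule_format, OF l1(1)] N1[rule_format, OF l1(2)] by simp
  have dd: "d ` I n = d ` I (max N1 N2)"
    using N2[rule_format, OF l1(3)] N2[rule_format, OF l1(4)] by simp
  have "I (max N1 N2) = I n"
    by (rule eq_lemma[OF A h[rule_format] h[rule_format] mono[OF n]]) (simp_all add: z dd)
  then show "I n = I (max N1 N2)" by (rule sym)
qed

lemma art_part: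
  fixes smul :: "'r::comm_ring_1 \<Rightarrow> 'a::ring_1 \<Rightarrow> 'a" and I :: "nat \<Rightarrow> 'a set"
  assumes A: "dg_R_algebra smul G d"
    and h: "\<forall>n. dg_ideal G d (I n)"
    and mono: "\<And>m n. m \<le> n \<Longrightarrow> I n \<subseteq> I m"
    and N1: "\<forall>n\<ge>N1. I n \<inter> cycles d = I N1 \<inter> cycles d"
    and N2: "\<forall>n\<ge>N2. d ` I n = d ` I N2"
  shows "\<exists>N. \<forall>n\<ge>N. I n = I N"
proof (intro exI allI impI)
  fix n assume n: "max N1 N2 \<le> n"
  have l1: "N1 \<le> n" "N1 \<le> max N1 N2" "N2 \<le> n" "N2 \<le> max N1 N2" using n by auto
  have z: "I n \<inter> cycles d = I (max N1 N2) \<inter> cycles d"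
    using N1[rule_format, OF l1(1)] N1[rule_format, OF l1(2)] by simp
  have dd: "d ` I n = d ` I (max N1 N2)"
    using N2[rule_format, OF l1(3)] N2[rule_format, OF l1(4)] by simp
  show "I n = I (max N1 N2)"
    by (rule eq_lemma[OF A h[rule_format] h[rule_format] mono[OF n]]) (simp_all add: z dd)
qed

theorem corollary2p3:
  fixes smul :: "'r::comm_ring_1 \<Rightarrow> 'a::ring_1 \<Rightarrow> 'a"
    and G :: "int \<Rightarrow> 'a set"
    and d :: "'a \<Rightarrow> 'a"
  assumes "dg_R_algebra smul G d"
  shows "(graded_noetherian (cycles d) G \<longrightarrow> dg_noetherian G d) \<and>
         (graded_artinian (cycles d) G \<longrightarrow> dg_artinian G d)"
proof (intro conjI impI)
  assume N: "graded_noetherian (cycles d) G"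
  show "dg_noetherian G d" unfolding dg_noetherian_def
  proof (intro allI impI)
    fix I :: "nat \<Rightarrow> 'a set"
    assume h: "(\<forall>n. dg_ideal G d (I n)) \<and> (\<forall>n. I n \<subseteq> I (Suc n))"
    have mono: "I m \<subseteq> I n" if "m \<le> n" for m n
      using h that lift_Suc_mono_le[of I m n] by blast
    have hI: "\<And>n. dg_ideal G d (I n)" using h by blast
    have Zc: "\<forall>n. graded_ideal_in (cycles d) G (I n \<inter> cycles d)"
      using ZI_ideal[OF assms hI] by blast
    have Zm: "\<forall>n. I n \<inter> cycles d \<subseteq> I (Suc n) \<inter> cycles d" using h by blast
    have Dc: "\<forall>n. graded_ideal_in (cycles d) G (d ` I n)"
      using DI_ideal[OF assms hI] by blast
    have Dm: "\<forall>n. d ` I n \<subseteq> d ` I (Suc n)" using h by (simp add: image_mono)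
    obtain N1 where N1: "\<forall>n\<ge>N1. I n \<inter> cycles d = I N1 \<inter> cycles d"
      apply (rule N[unfolded graded_noetherian_def, rule_format, of "\<lambda>n. I n \<inter> cycles d", THEN exE])
      using Zc Zm apply blast
      by blast
    obtain N2 where N2: "\<forall>n\<ge>N2. d ` I n = d ` I N2"
      apply (rule N[unfolded graded_noetherian_def, rule_format, of "\<lambda>n. d ` I n", THEN exE])
      using Dc Dm apply blast
      by blast
    show "\<exists>N. \<forall>n\<ge>N. I n = I N"
      by (rule noeth_part[OF assms _ mono N1 N2]) (rule allI, rule hI)
  qed
next
  assume N: "graded_artinian (cycles d) G"
  show "dg_artinian G d" unfolding dg_artinian_def
  proof (intro allI impI)
    fix I :: "nat \<Rightarrow> 'a set"
    assume h: "(\<forall>n. dg_ideal G d (I n)) \<and> (\<forall>n. I (Suc n) \<subseteq> I n)"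
    have mono: "I n \<subseteq> I m" if "m \<le> n" for m n
      using h that lift_Suc_antimono_le[of I m n] by blast
    have hI: "\<And>n. dg_ideal G d (I n)" using h by blast
    have Zc: "\<forall>n. graded_ideal_in (cycles d) G (I n \<inter> cycles d)"
      using ZI_ideal[OF assms hI] by blast
    have Zm: "\<forall>n. I (Suc n) \<inter> cycles d \<subseteq> I n \<inter> cycles d" using h by blast
    have Dc: "\<forall>n. graded_ideal_in (cycles d) G (d ` I n)"
      using DI_ideal[OF assms hI] by blast
    have Dm: "\<forall>n. d ` I (Suc n) \<subseteq> d ` I n" using h by (simp add: image_mono)
    obtain N1 where N1: "\<forall>n\<ge>N1. I n \<inter> cycles d = I N1 \<inter> cycles d"
      apply (rule N[unfolded graded_artinian_def, rule_format, of "\<lambda>n. I n \<inter> cycles d", THEN exE])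
      using Zc Zm apply blast
      by blast
    obtain N2 where N2: "\<forall>n\<ge>N2. d ` I n = d ` I N2"
      apply (rule N[unfolded graded_artinian_def, rule_format, of "\<lambda>n. d ` I n", THEN exE])
      using Dc Dm apply blast
      by blast
    show "\<exists>N. \<forall>n\<ge>N. I n = I N"
      by (rule art_part[OF assms _ mono N1 N2]) (rule allI, rule hI)
  qed
qed

end
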